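(* Let $g\ge1$ and $n\ge1$. For any $T\in\mathcal T_n$ there exists $\widehat T\in\mathcal T_n$ such that for every segment $[t,t')$ of $T$ (with $1\le t<t'\le n+1$): (i) $\hat w_n(\widehat T)>0$, $t$ and $t'$ are switch points of $\widehat T$ (where $t'=n+1$ is considered a switch point), and $\widehat T$ contains at most $l=\left\lceil\frac{\log(t'-t)}{\lfloor\log(g+1)\rfloor}\right\rceil+1$ segments in $[t,t')$; (ii) if the switch points of $\widehat T$ in $[t,t')$ are $t_1:=t<t_2<\cdots<t_{l'}$ and $t_{l'+1}:=t'$, then $l'\le l$, and for every nondecreasing function $f:[0,\infty)\to[0,\infty)$, \[ \sum_{i=1}^{l'}f(t_{i+1}-t_i)\le\sum_{i=0}^{l'-2}f\!\left(\frac{t'-t}{2^{i\lfloor\log(g+1)\rfloor}}\right)+f(t'-t) \le\int_0^{\frac{\log(t'-t)}{\lfloor\log(g+1)\rfloor}}f\!\left(\frac{t'-t}{2^{x\lfloor\log(g+1)\rfloor}}\right)dx+2f(t'-t), \] where the first sum on the right is empty if $l'=1$.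
   Context: $\log$ is base 2. $\mathcal T_n$ is the set of transition paths $T=(t_1,\ldots,t_C;n)$ with $C\ge0$ and $1<t_1<\cdots<t_C\le n$; with $t_0=1$, $t_{C+1}=n+1$, the segments of $T$ are $[t_c,t_{c+1})$, $c=0,\ldots,C$, and its switch points are $t_1,\ldots,t_C$. Weights: given switch probabilities $p(t|t')\in(0,1)$ for all $1\le t'<t$, let $U_1=1$ and $\Pr(U_t=t\mid U_{t-1}=t')=p(t|t')=1-\Pr(U_t=t'\mid U_{t-1}=t')$ define a Markov chain; a path $T\in\mathcal T_t$ corresponds to the realization jumping exactly at its switch points and $w_t(T)$ is its probability. Pruning with parameter $g$: write $s=o2^u$ with $o$ odd, $u\ge0$; $h_t(s)=1$ if $s\le t<s+g2^u$ and $0$ otherwise; $\hat p(t|t')=1-h_t(t')(1-p(t|t'))$; $\hat w_t$ is the Markov weight function defined from $\hat p$. *)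

theory Defs
  imports "HOL-Analysis.Analysis" "HOL-Computational_Algebra.Primes"
begin

text \<open>A transition path T = (t_1,...,t_C; n) is represented by its set of switch
  points S = {t_1,...,t_C}, a subset of {2..n}.\<close>
definition trans_paths :: "nat \<Rightarrow> nat set set" where
  "trans_paths n = {S. S \<subseteq> {2..n}}"

text \<open>Most recent jump time before s (U_{s-1} of the realization), with t_0 = 1.\<close>
definition last_switch :: "nat set \<Rightarrow> nat \<Rightarrow> nat" where
  "last_switch S s = Max (insert 1 {u \<in> S. u < s})"

text \<open>Markov weight w_t(T); p t t' stands for p(t|t').\<close>
definition markov_weight :: "(nat \<Rightarrow> nat \<Rightarrow> real) \<Rightarrow> nat \<Rightarrow> nat set \<Rightarrow> real" where
  "markov_weight p t S =
     (\<Prod>s\<in>{2..t}. if s \<in> S then p s (last_switch S s) else 1 - p s (last_switch S s))"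

definition h_prune :: "nat \<Rightarrow> nat \<Rightarrow> nat \<Rightarrow> real" where
  "h_prune g t s = (if s \<le> t \<and> t < s + g * 2 ^ multiplicity (2::nat) s then 1 else 0)"

definition pruned_p :: "nat \<Rightarrow> (nat \<Rightarrow> nat \<Rightarrow> real) \<Rightarrow> nat \<Rightarrow> nat \<Rightarrow> real" where
  "pruned_p g p t t' = 1 - h_prune g t t' * (1 - p t t')"

definition segments :: "nat \<Rightarrow> nat set \<Rightarrow> (nat \<times> nat) set" where
  "segments n S = {(a, b). a \<in> insert 1 S \<and> b \<in> insert (n + 1) S \<and> a < b \<and>
                          (\<forall>c\<in>S. \<not> (a < c \<and> c < b))}"

end

theory Submission
  imports Defs
begin

definition nxt :: "nat \<Rightarrow> nat \<Rightarrow> nat" where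
  "nxt k s = (s div 2^(multiplicity (2::nat) s + k) + 1) * 2^(multiplicity (2::nat) s + k)"

lemma nxt_props:
  assumes k: "k \<ge> 1" and s: "s \<ge> 1"
  shows "s < nxt k s" "nxt k s \<le> s + (2^k - 1) * 2^(multiplicity (2::nat) s)"
        "multiplicity (2::nat) (nxt k s) \<ge> multiplicity 2 s + k"
proof -
  define v where "v = multiplicity (2::nat) s"
  define M where "M = (2::nat)^(v+k)"
  have Mpos: "M > 0" by (simp add: M_def)
  have e: "nxt k s = (s div M + 1) * M" by (simp add: nxt_def M_def v_def)
  have dm: "s = M * (s div M) + s mod M" by simp
  have mlt: "s mod M < M" using Mpos by simp
  show "s < nxt k s" unfolding e using dm mlt by (metis add_less_cancel_left distrib_right mult.commute mult_1)
  have dv: "2^v dvd s" unfolding v_def by (rule multiplicity_dvd)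
  have ndv: "\<not> 2^(Suc v) dvd s"
  proof
    assume "2^(Suc v) dvd s"
    then have "multiplicity 2 s \<ge> Suc v" using s by (intro multiplicity_geI) auto
    then show False unfolding v_def by simp
  qed
  have "2^v dvd M" unfolding M_def by (simp add: le_imp_power_dvd)
  then have dv2: "2^v dvd s mod M" using dv by (simp add: dvd_mod)
  have "s mod M \<noteq> 0"
  proof
    assume "s mod M = 0"
    then have "M dvd s" by auto
    moreover have "2^(Suc v) dvd M" unfolding M_def using k by (intro le_imp_power_dvd) simp
    ultimately show False using ndv dvd_trans by blast
  qed
  then have ge: "s mod M \<ge> 2^v" using dv2 by (meson dvd_imp_le not_gr0)
  have "nxt k s = s + (M - s mod M)" unfolding e using dm mlt
    by (metis add.commute add.left_commute le_add_diff_inverse less_or_eq_imp_le mult.commute mult_Suc_right plus_1_eq_Suc)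
  also have "M - s mod M \<le> (2^k - 1) * 2^v"
  proof -
    have "M = 2^k * 2^v" by (simp add: M_def power_add)
    then have "M - 2^v = (2^k - 1) * 2^v" by (simp add: diff_mult_distrib)
    then show ?thesis using ge by linarith
  qed
  finally show "nxt k s \<le> s + (2^k - 1) * 2^(multiplicity (2::nat) s)" unfolding v_def by simp
  have "M dvd nxt k s" unfolding e by simp
  then have "multiplicity 2 (nxt k s) \<ge> v + k" unfolding M_def
    using \<open>s < nxt k s\<close> by (intro multiplicity_geI) auto
  then show "multiplicity (2::nat) (nxt k s) \<ge> multiplicity 2 s + k" unfolding v_def .
qed

definition chain :: "nat \<Rightarrow> nat \<Rightarrow> nat \<Rightarrow> nat" where "chain k t i = (nxt k ^^ i) t"
definition stopc :: "nat \<Rightarrow> nat \<Rightarrow> nat \<Rightarrow> bool" where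
  "stopc k t' s \<longleftrightarrow> t' \<le> s + (2^k-1) * 2^(multiplicity (2::nat) s)"
definition cN :: "nat \<Rightarrow> nat \<Rightarrow> nat \<Rightarrow> nat" where "cN k t t' = (LEAST i. stopc k t' (chain k t i))"
definition CC :: "nat \<Rightarrow> nat \<Rightarrow> nat \<Rightarrow> nat set" where "CC k t t' = chain k t ` {..cN k t t'}"

lemma chain_0[simp]: "chain k t 0 = t" by (simp add: chain_def)
lemma chain_Suc: "chain k t (Suc i) = nxt k (chain k t i)" by (simp add: chain_def)

lemma chain_ge: assumes "k \<ge> 1" "t \<ge> 1" shows "chain k t i \<ge> t + i"
proof (induction i)
  case (Suc i)
  then have "chain k t i \<ge> 1" using assms by simp
  then show ?case using nxt_props(1)[OF assms(1)] Suc by (simp add: chain_Suc) (meson Suc_le_eq le_less_trans)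
qed simp

lemma chain_less: assumes "k \<ge> 1" "t \<ge> 1" "i < j" shows "chain k t i < chain k t j"
proof -
  have "chain k t n < chain k t (Suc n)" for n
    using nxt_props(1)[OF assms(1), of "chain k t n"] chain_ge[OF assms(1,2), of n] assms(2)
    by (simp add: chain_Suc)
  then show ?thesis using assms(3) by (rule lift_Suc_mono_less)
qed

lemma chain_mult: assumes "k \<ge> 1" "t \<ge> 1" "i \<le> j"
  shows "multiplicity (2::nat) (chain k t j) \<ge> multiplicity 2 (chain k t i) + (j - i) * k"
  using assms(3)
proof (induction j rule: dec_induct)
  case (step j)
  have "chain k t j \<ge> 1" using chain_ge[OF assms(1,2), of j] assms(2) by simp
  from nxt_props(3)[OF assms(1) this] step.IH step.hyps show ?case
    by (simp add: chain_Suc Suc_diff_le)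
qed simp

lemma cN_props: assumes "k \<ge> 1" "t \<ge> 1"
  shows "stopc k t' (chain k t (cN k t t'))" "i < cN k t t' \<Longrightarrow> \<not> stopc k t' (chain k t i)"
proof -
  have ex: "stopc k t' (chain k t t')" using chain_ge[OF assms, of t'] unfolding stopc_def by linarith
  show "stopc k t' (chain k t (cN k t t'))" unfolding cN_def using ex by (rule LeastI)
  show "i < cN k t t' \<Longrightarrow> \<not> stopc k t' (chain k t i)" unfolding cN_def by (rule not_less_Least)
qed

lemma chain_lt: assumes "k \<ge> 1" "t \<ge> 1" "t < t'" "i \<le> cN k t t'" shows "chain k t i < t'"
proof (cases i)
  case (Suc j)
  then have "\<not> stopc k t' (chain k t j)" using cN_props(2)[OF assms(1,2)] assms(4) by simp
  moreover have "chain k t j \<ge> 1" using chain_ge[OF assms(1,2), of j] assms(2) by simp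
  ultimately show ?thesis using nxt_props(2)[OF assms(1)] unfolding stopc_def Suc chain_Suc
    by (meson le_less_trans not_le)
qed (use assms in simp)

lemma cN_count: assumes "k \<ge> 1" "t \<ge> 1" "cN k t t' \<ge> 1"
  shows "2^((cN k t t' - 1) * k) < t' - t"
proof -
  let ?N = "cN k t t'"
  let ?c = "chain k t (?N - 1)"
  have ns: "\<not> stopc k t' ?c" using cN_props(2)[OF assms(1,2)] assms(3) by simp
  have m: "multiplicity (2::nat) ?c \<ge> (?N - 1) * k" using chain_mult[OF assms(1,2), of 0 "?N - 1"] by simp
  have "(2::nat)^((?N - 1) * k) \<le> 2^(multiplicity 2 ?c)" using m by (simp add: power_increasing)
  also have "\<dots> \<le> (2^k - 1) * 2^(multiplicity 2 ?c)"
  proof -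
    have "(2::nat)^k \<ge> 2" using assms(1) by (metis power_one_right power_increasing one_le_numeral)
    then show ?thesis by simp
  qed
  finally have "?c + 2^((?N - 1) * k) < t'" using ns unfolding stopc_def by linarith
  moreover have "?c \<ge> t" using chain_ge[OF assms(1,2), of "?N - 1"] by simp
  ultimately show ?thesis by linarith
qed

lemma cN_gap: assumes "k \<ge> 1" "t \<ge> 1" "i < cN k t t'"
  shows "(chain k t (Suc i) - chain k t i) * 2^((cN k t t' - 1 - i) * k) < t' - t"
proof -
  let ?N = "cN k t t'"
  let ?c = "chain k t (?N - 1)"
  let ?ci = "chain k t i"
  have ns: "\<not> stopc k t' ?c" using cN_props(2)[OF assms(1,2)] assms(3) by simp
  have m: "multiplicity (2::nat) ?c \<ge> multiplicity 2 ?ci + (?N - 1 - i) * k"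
    using chain_mult[OF assms(1,2), of i "?N - 1"] assms(3) by simp
  have ci1: "?ci \<ge> 1" using chain_ge[OF assms(1,2), of i] assms(2) by simp
  have "(chain k t (Suc i) - ?ci) * 2^((?N - 1 - i) * k) \<le> (2^k - 1) * 2^(multiplicity 2 ?ci) * 2^((?N - 1 - i) * k)"
    using nxt_props(2)[OF assms(1) ci1] by (simp add: chain_Suc)
  also have "\<dots> = (2^k - 1) * 2^(multiplicity 2 ?ci + (?N - 1 - i) * k)" by (simp add: power_add)
  also have "\<dots> \<le> (2^k - 1) * 2^(multiplicity 2 ?c)" using m by (intro mult_left_mono power_increasing) auto
  also have "\<dots> < t' - ?c" using ns unfolding stopc_def by linarith
  also have "\<dots> \<le> t' - t" using chain_ge[OF assms(1,2), of "?N - 1"] by simp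
  finally show ?thesis .
qed

lemma sum_le_integral:
  fixes F :: "real \<Rightarrow> real"
  assumes anti: "\<And>x y. 0 \<le> x \<Longrightarrow> x \<le> y \<Longrightarrow> F y \<le> F x"
  shows "(\<Sum>i\<in>{1..m}. F (real i)) \<le> integral {0..real m} F"
proof (induction m)
  case 0
  then show ?case by simp
next
  case (Suc m)
  have int: "F integrable_on {0..b}" for b
  proof -
    have "mono_on {0..b} (\<lambda>x. - F x)" unfolding mono_on_def using anti by auto
    then have "(\<lambda>x. - F x) integrable_on {0..b}" by (rule integrable_on_mono_on)
    then have "(\<lambda>x. - (- F x)) integrable_on {0..b}" by (rule integrable_neg)
    then show ?thesis by simp
  qed
  have int2: "F integrable_on {real m..real (Suc m)}"
    by (rule integrable_subinterval_real[OF int[of "real (Suc m)"]]) auto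
  have "F (real (Suc m)) = integral {real m..real (Suc m)} (\<lambda>_. F (real (Suc m)))" by simp
  also have "\<dots> \<le> integral {real m..real (Suc m)} F"
    by (rule integral_le[OF _ int2]) (auto intro: anti)
  finally have "(\<Sum>i\<in>{1..Suc m}. F (real i)) \<le> integral {0..real m} F + integral {real m..real (Suc m)} F"
    using Suc.IH by simp
  also have "\<dots> = integral {0..real (Suc m)} F"
    by (rule Henstock_Kurzweil_Integration.integral_combine[OF _ _ int]) auto
  finally show ?case .
qed


lemma pow2_real: "(2::real) powr (real m * real kn) = real ((2::nat) ^ (m * kn))"
  by (simp add: powr_realpow flip: of_nat_mult)

lemma seg_main:
  fixes f :: "real \<Rightarrow> real" and kn t t' :: nat
  assumes kn: "kn \<ge> 1" and t: "t \<ge> 1" "t < t'" and fm: "mono_on {0..} f" and fnn: "\<forall>x\<ge>0. f x \<ge> 0"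
  defines "N \<equiv> cN kn t t'" and "d \<equiv> real t' - real t" and "kr \<equiv> real kn"
  defines "xs \<equiv> map (chain kn t) [0..<Suc N] @ [t']"
  shows "(\<Sum>i<Suc N. f (real (xs ! Suc i) - real (xs ! i))) \<le> (\<Sum>i<Suc N - 1. f (d / 2 powr (real i * kr))) + f d"
    and "(\<Sum>i<Suc N - 1. f (d / 2 powr (real i * kr))) + f d \<le> integral {0..log 2 d / kr} (\<lambda>x. f (d / 2 powr (x * kr))) + 2 * f d"
    and "int (Suc N) \<le> \<lceil>log 2 d / kr\<rceil> + 1"
proof -
  have d1: "d \<ge> 1" using t unfolding d_def by simp
  have kr: "kr \<ge> 1" using kn unfolding kr_def by simp
  have xsi: "xs ! i = chain kn t i" if "i \<le> N" for i
    using that unfolding xs_def by (simp add: nth_append less_Suc_eq_le)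
  have xsN: "xs ! Suc N = t'" unfolding xs_def by (simp add: nth_append)
  have cge: "chain kn t i \<ge> t" for i using chain_ge[OF kn t(1), of i] by simp
  have cmono: "chain kn t i \<le> chain kn t (Suc i)" for i
    using chain_less[OF kn t(1), of i "Suc i"] by simp
  have clt: "chain kn t N < t'" using chain_lt[OF kn t] unfolding N_def by simp
  have Xpos: "log 2 d / kr \<ge> 0" using d1 kr by simp
  have cnt: "real (N - 1) < log 2 d / kr" if "N \<ge> 1"
  proof -
    have "2^((N - 1) * kn) < t' - t" using cN_count[OF kn t(1)] that unfolding N_def by simp
    then have "real (2^((N - 1) * kn)) < d" unfolding d_def using t by linarith
    then have "2 powr (real (N - 1) * kr) < d" unfolding kr_def pow2_real .
    then have "real (N - 1) * kr < log 2 d" using d1 by (subst less_log_iff) auto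
    then show ?thesis using kr by (simp add: pos_less_divide_eq)
  qed
  show "int (Suc N) \<le> \<lceil>log 2 d / kr\<rceil> + 1"
  proof (cases "N \<ge> 1")
    case True
    have "int N - 1 < \<lceil>log 2 d / kr\<rceil>" using cnt[OF True] True by (simp add: less_ceiling_iff of_nat_diff)
    then show ?thesis by simp
  next
    case False
    then have "N = 0" by simp
    then show ?thesis using Xpos by simp
  qed
  have "(\<Sum>i<Suc N. f (real (xs ! Suc i) - real (xs ! i)))
      = (\<Sum>i<N. f (real (chain kn t (Suc i)) - real (chain kn t i))) + f (real t' - real (chain kn t N))"
    by (simp add: xsi xsN)
  also have "(\<Sum>i<N. f (real (chain kn t (Suc i)) - real (chain kn t i))) \<le> (\<Sum>i<N. f (d / 2 powr (real (N - Suc i) * kr)))"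
  proof (rule sum_mono)
    fix i assume i: "i \<in> {..<N}"
    have "(chain kn t (Suc i) - chain kn t i) * 2^((N - 1 - i) * kn) < t' - t"
      using cN_gap[OF kn t(1)] i unfolding N_def by simp
    then have "real (chain kn t (Suc i) - chain kn t i) * real (2^((N - 1 - i) * kn)) < d"
      unfolding d_def using t by (metis of_nat_diff of_nat_less_iff of_nat_mult less_imp_le)
    then have "real (chain kn t (Suc i) - chain kn t i) \<le> d / 2 powr (real (N - Suc i) * kr)"
      unfolding kr_def pow2_real by (simp add: pos_le_divide_eq)
    moreover have "real (chain kn t (Suc i) - chain kn t i) = real (chain kn t (Suc i)) - real (chain kn t i)"
      using cmono[of i] by simp
    ultimately show "f (real (chain kn t (Suc i)) - real (chain kn t i)) \<le> f (d / 2 powr (real (N - Suc i) * kr))"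
      using cmono[of i] by (intro mono_onD[OF fm]) auto
  qed
  also have "(\<Sum>i<N. f (d / 2 powr (real (N - Suc i) * kr))) = (\<Sum>i<N. f (d / 2 powr (real i * kr)))"
    by (rule sum.nat_diff_reindex)
  also have "f (real t' - real (chain kn t N)) \<le> f d"
    using cge[of N] clt unfolding d_def by (intro mono_onD[OF fm]) auto
  finally show "(\<Sum>i<Suc N. f (real (xs ! Suc i) - real (xs ! i))) \<le> (\<Sum>i<Suc N - 1. f (d / 2 powr (real i * kr))) + f d"
    by simp
  define F where "F x = f (d / 2 powr (x * kr))" for x
  have anti: "F y \<le> F x" if "0 \<le> x" "x \<le> y" for x y
    unfolding F_def using that d1 kr
    by (intro mono_onD[OF fm]) (auto intro!: divide_left_mono mult_pos_pos simp: mult_right_mono)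
  have Fnn: "F x \<ge> 0" for x unfolding F_def using fnn d1 by simp
  have intg: "F integrable_on {0..b}" for b
  proof -
    have "mono_on {0..b} (\<lambda>x. - F x)" unfolding mono_on_def using anti by auto
    then have "(\<lambda>x. - F x) integrable_on {0..b}" by (rule integrable_on_mono_on)
    then have "(\<lambda>x. - (- F x)) integrable_on {0..b}" by (rule integrable_neg)
    then show ?thesis by simp
  qed
  have I0: "integral {0..log 2 d / kr} F \<ge> 0" by (rule integral_nonneg[OF intg]) (use Fnn in auto)
  have "(\<Sum>i<N. F (real i)) \<le> integral {0..log 2 d / kr} F + f d"
  proof (cases "N \<ge> 1")
    case True
    have "(\<Sum>i<N. F (real i)) = F 0 + (\<Sum>i\<in>{1..N - 1}. F (real i))"
    proof -
      have "{..<N} = insert 0 {1..N - 1}" using True by auto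
      then show ?thesis by simp
    qed
    also have "F 0 = f d" unfolding F_def by simp
    also have "(\<Sum>i\<in>{1..N - 1}. F (real i)) \<le> integral {0..real (N - 1)} F"
      by (rule sum_le_integral) (rule anti)
    also have "\<dots> \<le> integral {0..log 2 d / kr} F"
      by (rule integral_subset_le) (use cnt[OF True] intg Fnn in auto)
    finally show ?thesis by simp
  next
    case False
    then have "N = 0" by simp
    then show ?thesis using I0 d1 fnn by simp
  qed
  then show "(\<Sum>i<Suc N - 1. f (d / 2 powr (real i * kr))) + f d \<le> integral {0..log 2 d / kr} (\<lambda>x. f (d / 2 powr (x * kr))) + 2 * f d"
    unfolding F_def by simp
qed


lemma seg_bounds: assumes "T \<subseteq> {2..n}" "(a, b) \<in> segments n T"
  shows "1 \<le> a" "a < b" "b \<le> n + 1"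
  using assms unfolding segments_def by auto

lemma seg_unique: assumes T: "T \<subseteq> {2..n}" and s1: "(a, b) \<in> segments n T" and s2: "(a', b') \<in> segments n T"
  and x: "a \<le> x" "x < b" "a' \<le> x" "x < b'"
  shows "a = a' \<and> b = b'"
proof -
  have A: "a = a'" if s1: "(a, b) \<in> segments n T" and s2: "(a', b') \<in> segments n T"
      and x: "a \<le> x" "x < b" "a' \<le> x" "x < b'" for a b a' b'
  proof (rule ccontr)
    assume ne: "a \<noteq> a'"
    show False
    proof (cases "a < a'")
      case True
      have "a' \<in> T" using s2 seg_bounds[OF T s1] True unfolding segments_def by auto
      then show False using s1 True x unfolding segments_def by auto
    next
      case False
      then have "a' < a" using ne by simp
      have "a \<in> T" using s1 seg_bounds[OF T s2] \<open>a' < a\<close> unfolding segments_def by auto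
      then show False using s2 \<open>a' < a\<close> x unfolding segments_def by auto
    qed
  qed
  have aa: "a = a'" using A[OF s1 s2 x] .
  have "b = b'"
  proof (rule ccontr)
    assume ne: "b \<noteq> b'"
    show False
    proof (cases "b < b'")
      case True
      have "b \<in> T" using s1 seg_bounds[OF T s2] True unfolding segments_def by auto
      then show False using s2 True x aa unfolding segments_def by auto
    next
      case False
      then have "b' < b" using ne by simp
      have "b' \<in> T" using s2 seg_bounds[OF T s1] \<open>b' < b\<close> unfolding segments_def by auto
      then show False using s1 \<open>b' < b\<close> x aa unfolding segments_def by auto
    qed
  qed
  then show ?thesis using aa by simp
qed

lemma seg_exists: assumes T: "T \<subseteq> {2..n}" and x: "1 \<le> x" "x \<le> n"
  shows "\<exists>a b. (a, b) \<in> segments n T \<and> a \<le> x \<and> x < b"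
proof -
  have fin: "finite T" using T finite_subset by blast
  define a where "a = Max (insert 1 {u\<in>T. u \<le> x})"
  define b where "b = Min (insert (n+1) {u\<in>T. x < u})"
  have fa: "finite (insert 1 {u\<in>T. u \<le> x})" using fin by simp
  have fb: "finite (insert (n+1) {u\<in>T. x < u})" using fin by simp
  have aI: "a \<in> insert 1 {u\<in>T. u \<le> x}" unfolding a_def using fa by (rule Max_in) simp
  have bI: "b \<in> insert (n+1) {u\<in>T. x < u}" unfolding b_def using fb by (rule Min_in) simp
  have ax: "a \<le> x" using aI x by auto
  have xb: "x < b" using bI x by auto
  have noc: "\<forall>c\<in>T. \<not> (a < c \<and> c < b)"
  proof (intro ballI notI)
    fix c assume c: "c \<in> T" "a < c \<and> c < b"
    show False
    proof (cases "c \<le> x")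
      case True
      then have "c \<le> a" unfolding a_def using fa c by (intro Max_ge) auto
      then show False using c by simp
    next
      case False
      then have "b \<le> c" unfolding b_def using fb c by (intro Min_le) auto
      then show False using c by simp
    qed
  qed
  have "(a, b) \<in> segments n T"
    unfolding segments_def using aI bI ax xb noc by auto
  then show ?thesis using ax xb by blast
qed

lemma CC_sub: assumes "k \<ge> 1" "t \<ge> 1" "t < t'" shows "CC k t t' \<subseteq> {t..<t'}"
proof
  fix x assume "x \<in> CC k t t'"
  then obtain i where "i \<le> cN k t t'" "x = chain k t i" unfolding CC_def by auto
  then show "x \<in> {t..<t'}" using chain_ge[OF assms(1,2), of i] chain_lt[OF assms] by auto
qed

lemma CC_start: "t \<in> CC k t t'"
  unfolding CC_def by (metis atMost_iff chain_0 imageI zero_le)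

definition Tp :: "nat \<Rightarrow> nat \<Rightarrow> nat set \<Rightarrow> nat set" where
  "Tp k n T = (\<Union>(a, b)\<in>segments n T. CC k a b) - {1}"

lemma Tp_sub: assumes "k \<ge> 1" "T \<subseteq> {2..n}" shows "Tp k n T \<subseteq> {2..n}"
proof
  fix x assume "x \<in> Tp k n T"
  then obtain a b where ab: "(a, b) \<in> segments n T" "x \<in> CC k a b" "x \<noteq> 1" unfolding Tp_def by auto
  note bb = seg_bounds[OF assms(2) ab(1)]
  have "x \<in> {a..<b}" using CC_sub[OF assms(1) bb(1,2)] ab(2) by auto
  then show "x \<in> {2..n}" using bb ab(3) by auto
qed

lemma Tp_local: assumes k: "k \<ge> 1" and T: "T \<subseteq> {2..n}" and s: "(t, t') \<in> segments n T"
  shows "insert 1 (Tp k n T) \<inter> {t..<t'} = CC k t t'"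
proof
  note bb = seg_bounds[OF T s]
  show "CC k t t' \<subseteq> insert 1 (Tp k n T) \<inter> {t..<t'}"
    using CC_sub[OF k bb(1,2)] s unfolding Tp_def by blast
  show "insert 1 (Tp k n T) \<inter> {t..<t'} \<subseteq> CC k t t'"
  proof
    fix x assume x: "x \<in> insert 1 (Tp k n T) \<inter> {t..<t'}"
    show "x \<in> CC k t t'"
    proof (cases "x = 1")
      case True
      then have "t = 1" using x bb by auto
      then show ?thesis using True CC_start by simp
    next
      case False
      then obtain a b where ab: "(a, b) \<in> segments n T" "x \<in> CC k a b" using x unfolding Tp_def by auto
      note bb2 = seg_bounds[OF T ab(1)]
      have "x \<in> {a..<b}" using CC_sub[OF k bb2(1,2)] ab(2) by auto
      then have "a = t \<and> b = t'" using seg_unique[OF T ab(1) s, of x] x by auto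
      then show ?thesis using ab by simp
    qed
  qed
qed


lemma weight_pos:
  fixes p :: "nat \<Rightarrow> nat \<Rightarrow> real"
  assumes p_range: "\<And>t t'. 1 \<le> t' \<Longrightarrow> t' < t \<Longrightarrow> 0 < p t t' \<and> p t t' < 1"
    and k: "k \<ge> 1" and kg: "2^k \<le> g + 1" and T: "T \<subseteq> {2..n}"
  shows "markov_weight (pruned_p g p) n (Tp k n T) > 0"
  unfolding markov_weight_def
proof (rule prod_pos)
  fix s assume s: "s \<in> {2..n}"
  define T' where "T' = Tp k n T"
  have T'sub: "T' \<subseteq> {2..n}" unfolding T'_def by (rule Tp_sub[OF k T])
  have finT': "finite T'" using T'sub finite_subset by blast
  define A where "A = insert 1 {u\<in>T'. u < s}"
  define a where "a = last_switch T' s"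
  have fA: "finite A" unfolding A_def using finT' by simp
  have aA: "a \<in> A" unfolding a_def last_switch_def A_def[symmetric] using fA by (rule Max_in) (simp add: A_def)
  have a1: "a \<ge> 1" unfolding a_def last_switch_def A_def[symmetric] using fA by (rule Max_ge) (simp add: A_def)
  have as: "a < s" using aA s unfolding A_def by auto
  have amax: "u \<le> a" if "u \<in> T'" "u < s" for u
    unfolding a_def last_switch_def A_def[symmetric] using fA that by (intro Max_ge) (auto simp: A_def)
  have p01: "0 < p s a" "p s a < 1" using p_range[OF a1 as] by auto
  have h01: "h_prune g s a = 0 \<or> h_prune g s a = 1" unfolding h_prune_def by simp
  show "0 < (if s \<in> T' then pruned_p g p s (last_switch T' s) else 1 - pruned_p g p s (last_switch T' s))"
  proof (cases "s \<in> T'")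
    case True
    then show ?thesis using h01 p01 unfolding a_def[symmetric] pruned_p_def by auto
  next
    case False
    obtain t t' where seg: "(t, t') \<in> segments n T" "t \<le> s" "s < t'" using seg_exists[OF T, of s] s by auto
    note bb = seg_bounds[OF T seg(1)]
    note loc = Tp_local[OF k T seg(1), folded T'_def]
    have tin: "t \<in> insert 1 T'" using loc CC_start[of t k t'] by blast
    have ts: "t < s" using tin False s seg(2) by (cases "t = s") auto
    have ta: "t \<le> a" using tin ts amax a1 by auto
    have "a \<in> insert 1 T' \<inter> {t..<t'}" using aA ta as seg(3) unfolding A_def by auto
    then have "a \<in> CC k t t'" using loc by (simp only:)
    then obtain i where i: "i \<le> cN k t t'" "a = chain k t i" unfolding CC_def by auto
    have key: "s < a + (2^k - 1) * 2^(multiplicity (2::nat) a)"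
    proof (cases "i < cN k t t'")
      case True
      define c where "c = chain k t (Suc i)"
      have "c \<in> CC k t t'" unfolding CC_def c_def using True by auto
      then have cin: "c \<in> insert 1 T'" using loc by blast
      have ac: "a < c" unfolding c_def i(2) using chain_less[OF k bb(1), of i "Suc i"] by simp
      then have "c \<in> T'" using cin a1 by auto
      then have "s < c" using amax[of c] ac False by (cases "c < s") (auto simp: not_less le_less)
      also have "c \<le> a + (2^k - 1) * 2^(multiplicity (2::nat) a)"
        unfolding c_def chain_Suc i(2)[symmetric] by (rule nxt_props(2)[OF k a1])
      finally show ?thesis .
    next
      case False
      then have "i = cN k t t'" using i by simp
      then have "stopc k t' a" using cN_props(1)[OF k bb(1)] i by simp
      then show ?thesis using seg(3) unfolding stopc_def by simp
    qed
    have "(2^k - 1) * 2^(multiplicity (2::nat) a) \<le> g * 2^(multiplicity (2::nat) a)"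
      using kg by (intro mult_right_mono) auto
    then have "s < a + g * 2^(multiplicity (2::nat) a)" using key by linarith
    then have "h_prune g s a = 1" using as unfolding h_prune_def by simp
    then show ?thesis using False p01 unfolding a_def[symmetric] pruned_p_def by simp
  qed
qed


lemma sorted_CC: assumes k: "k \<ge> 1" "t \<ge> 1"
  shows "sorted_list_of_set (CC k t t') = map (chain k t) [0..<Suc (cN k t t')]"
proof (rule strict_sorted_equal)
  show "sorted_wrt (<) (sorted_list_of_set (CC k t t'))" by simp
  show "sorted_wrt (<) (map (chain k t) [0..<Suc (cN k t t')])"
    unfolding sorted_wrt_map by (rule sorted_wrt_mono_rel[OF _ sorted_wrt_upt]) (use chain_less[OF k] in auto)
  show "set (sorted_list_of_set (CC k t t')) = set (map (chain k t) [0..<Suc (cN k t t')])"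
  proof -
    have "finite (CC k t t')" unfolding CC_def by simp
    then show ?thesis unfolding CC_def set_map set_upt atLeast0LessThan lessThan_Suc_atMost by simp
  qed
qed

theorem lemma3:
  fixes p :: "nat \<Rightarrow> nat \<Rightarrow> real" and g n :: nat and T :: "nat set"
  assumes p_range: "\<And>t t'. 1 \<le> t' \<Longrightarrow> t' < t \<Longrightarrow> 0 < p t t' \<and> p t t' < 1"
    and g: "g \<ge> 1" and n: "n \<ge> 1"
    and T: "T \<in> trans_paths n"
  shows "\<exists>T' \<in> trans_paths n. \<forall>(t, t') \<in> segments n T.
    (let k = real_of_int \<lfloor>log 2 (real g + 1)\<rfloor>;
         l = \<lceil>log 2 (real t' - real t) / k\<rceil> + 1;
         ts = sorted_list_of_set (insert 1 T' \<inter> {t..<t'});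
         l' = length ts;
         xs = ts @ [t']
     in markov_weight (pruned_p g p) n T' > 0 \<and>
        t \<in> insert 1 T' \<and> t' \<in> insert (n + 1) T' \<and>
        int (card (insert 1 T' \<inter> {t..<t'})) \<le> l \<and>
        hd ts = t \<and> int l' \<le> l \<and>
        (\<forall>f :: real \<Rightarrow> real. mono_on {0..} f \<longrightarrow> (\<forall>x\<ge>0. f x \<ge> 0) \<longrightarrow>
           (\<Sum>i<l'. f (real (xs ! Suc i) - real (xs ! i)))
             \<le> (\<Sum>i<l' - 1. f ((real t' - real t) / 2 powr (real i * k))) + f (real t' - real t)
         \<and> (\<Sum>i<l' - 1. f ((real t' - real t) / 2 powr (real i * k))) + f (real t' - real t)
             \<le> integral {0..log 2 (real t' - real t) / k}
                  (\<lambda>x. f ((real t' - real t) / 2 powr (x * k))) + 2 * f (real t' - real t)))"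
proof -
  define kn where "kn = nat \<lfloor>log 2 (real g + 1)\<rfloor>"
  have lg: "log 2 (real g + 1) \<ge> 1" using g by simp
  have kfl: "real_of_int \<lfloor>log 2 (real g + 1)\<rfloor> = real kn"
    unfolding kn_def using lg by simp
  have kn1: "kn \<ge> 1" unfolding kn_def using lg by linarith
  have "real kn \<le> log 2 (real g + 1)" using kfl of_int_floor_le by metis
  then have "2 powr real kn \<le> real g + 1" by (subst (asm) le_log_iff) auto
  then have "real ((2::nat)^kn) \<le> real (g + 1)" by (simp add: powr_realpow)
  then have kg: "2^kn \<le> g + 1" by linarith
  have TS: "T \<subseteq> {2..n}" using T unfolding trans_paths_def by simp
  define T' where "T' = Tp kn n T"
  have T'S: "T' \<subseteq> {2..n}" unfolding T'_def by (rule Tp_sub[OF kn1 TS])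
  have W: "markov_weight (pruned_p g p) n T' > 0"
    unfolding T'_def by (rule weight_pos[OF p_range kn1 kg TS])
  have T'mem: "T' \<in> trans_paths n" using T'S by (simp add: trans_paths_def)
  show ?thesis
  proof (rule bexI[OF _ T'mem], unfold Let_def kfl, intro ballI, clarify)
    fix t t' assume seg: "(t, t') \<in> segments n T"
    note bb = seg_bounds[OF TS seg]
    have loc: "insert 1 T' \<inter> {t..<t'} = CC kn t t'" unfolding T'_def by (rule Tp_local[OF kn1 TS seg])
    have tsl: "sorted_list_of_set (insert 1 T' \<inter> {t..<t'}) = map (chain kn t) [0..<Suc (cN kn t t')]"
      unfolding loc by (rule sorted_CC[OF kn1 bb(1)])
    have card: "card (insert 1 T' \<inter> {t..<t'}) = Suc (cN kn t t')"
    proof -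
      have "card (insert 1 T' \<inter> {t..<t'}) = length (sorted_list_of_set (insert 1 T' \<inter> {t..<t'}))"
        by simp
      then show ?thesis unfolding tsl by simp
    qed
    have tin: "t \<in> insert 1 T'" using loc CC_start[of t kn t'] by blast
    have t'in: "t' \<in> insert (n + 1) T'"
    proof (cases "t' = n + 1")
      case False
      then have "t' \<in> T" using seg unfolding segments_def by auto
      then have "1 \<le> t'" "t' \<le> n" "2 \<le> t'" using TS by auto
      then obtain a b where ab: "(a, b) \<in> segments n T" "a \<le> t'" "t' < b" using seg_exists[OF TS] by blast
      have "a = t'"
      proof (rule ccontr)
        assume "a \<noteq> t'"
        then have "a < t'" using ab by simp
        then show False using ab \<open>t' \<in> T\<close> unfolding segments_def by auto
      qed
      have "t' \<in> insert 1 T' \<inter> {a..<b}" using Tp_local[OF kn1 TS ab(1), folded T'_def] CC_start[of a kn b] \<open>a = t'\<close> by blast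
      then show ?thesis using \<open>2 \<le> t'\<close> by auto
    qed simp
    have c3: "int (Suc (cN kn t t')) \<le> \<lceil>log 2 (real t' - real t) / real kn\<rceil> + 1"
      using seg_main(3)[OF kn1 bb(1) bb(2), of "\<lambda>_. 0"] by (simp add: mono_on_const)
    have hd: "hd (sorted_list_of_set (insert 1 T' \<inter> {t..<t'})) = t" unfolding tsl by (simp del: upt_Suc add: upt_conv_Cons)
    have len: "length (sorted_list_of_set (insert 1 T' \<inter> {t..<t'})) = Suc (cN kn t t')" unfolding tsl by simp
    show "0 < markov_weight (pruned_p g p) n T' \<and>
        t \<in> insert 1 T' \<and> t' \<in> insert (n + 1) T' \<and>
        int (card (insert 1 T' \<inter> {t..<t'})) \<le> \<lceil>log 2 (real t' - real t) / real kn\<rceil> + 1 \<and>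
        hd (sorted_list_of_set (insert 1 T' \<inter> {t..<t'})) = t \<and>
        int (length (sorted_list_of_set (insert 1 T' \<inter> {t..<t'}))) \<le> \<lceil>log 2 (real t' - real t) / real kn\<rceil> + 1 \<and>
        (\<forall>f :: real \<Rightarrow> real. mono_on {0..} f \<longrightarrow> (\<forall>x\<ge>0. 0 \<le> f x) \<longrightarrow>
           (\<Sum>i<length (sorted_list_of_set (insert 1 T' \<inter> {t..<t'})). f (real ((sorted_list_of_set (insert 1 T' \<inter> {t..<t'}) @ [t']) ! Suc i) - real ((sorted_list_of_set (insert 1 T' \<inter> {t..<t'}) @ [t']) ! i)))
             \<le> (\<Sum>i<length (sorted_list_of_set (insert 1 T' \<inter> {t..<t'})) - 1. f ((real t' - real t) / 2 powr (real i * real kn))) + f (real t' - real t) \<and>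
           (\<Sum>i<length (sorted_list_of_set (insert 1 T' \<inter> {t..<t'})) - 1. f ((real t' - real t) / 2 powr (real i * real kn))) + f (real t' - real t)
             \<le> integral {0..log 2 (real t' - real t) / real kn} (\<lambda>x. f ((real t' - real t) / 2 powr (x * real kn))) + 2 * f (real t' - real t))"
    proof (intro conjI allI impI)
      fix f :: "real \<Rightarrow> real" assume fm: "mono_on {0..} f" and fnn: "\<forall>x\<ge>0. 0 \<le> f x"
      note sm = seg_main[OF kn1 bb(1) bb(2) fm fnn]
      show "(\<Sum>i<length (sorted_list_of_set (insert 1 T' \<inter> {t..<t'})). f (real ((sorted_list_of_set (insert 1 T' \<inter> {t..<t'}) @ [t']) ! Suc i) - real ((sorted_list_of_set (insert 1 T' \<inter> {t..<t'}) @ [t']) ! i)))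
             \<le> (\<Sum>i<length (sorted_list_of_set (insert 1 T' \<inter> {t..<t'})) - 1. f ((real t' - real t) / 2 powr (real i * real kn))) + f (real t' - real t)"
        using sm(1) unfolding len unfolding tsl .
      show "(\<Sum>i<length (sorted_list_of_set (insert 1 T' \<inter> {t..<t'})) - 1. f ((real t' - real t) / 2 powr (real i * real kn))) + f (real t' - real t)
             \<le> integral {0..log 2 (real t' - real t) / real kn} (\<lambda>x. f ((real t' - real t) / 2 powr (x * real kn))) + 2 * f (real t' - real t)"
        using sm(2) unfolding len .
    qed (use W tin t'in c3 hd len card in auto)
  qed
qed

end
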